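(* Let $I,J\subseteq\mathbb{R}$ be intervals, $\tilde J\subseteq\mathbb{R}$, let $t:I\times J\to\tilde J$ and $h:I\times J\to(0,\infty)$ be such that $(g\circ t)\cdot h$ is competitorblind for every bounded continuous $g:\mathbb{R}\to\mathbb{R}$. Then $t$ is not injective.
   Context: Two finite measures $\alpha,\beta$ on $\mathbb{R}^2$ are competitors if they have the same first marginal $\alpha_0$ and the same second marginal, and for disintegrations $(\alpha_x),(\beta_x)$ with respect to $\alpha_0$ one has $\int y\,\alpha_x(dy)=\int y\,\beta_x(dy)$ for $\alpha_0$-a.e. $x$. A function $f$ on a rectangle $A\times B$ is called competitorblind if $\int f\,d\alpha=\int f\,d\beta$ whenever $\alpha,\beta$ are competitors concentrated on $A\times B$. *)

theory Defs
  imports "HOL-Probability.Probability"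
begin

definition nondeg_interval :: "real set \<Rightarrow> bool" where
  "nondeg_interval I \<longleftrightarrow> is_interval I \<and> (\<exists>x y. x \<in> I \<and> y \<in> I \<and> x \<noteq> y)"

definition fin_borel_meas2 :: "(real \<times> real) measure \<Rightarrow> bool" where
  "fin_borel_meas2 \<alpha> \<longleftrightarrow> finite_measure \<alpha> \<and> sets \<alpha> = sets (borel :: (real \<times> real) measure)"

definition marg1 :: "(real \<times> real) measure \<Rightarrow> real measure" where
  "marg1 \<alpha> = distr \<alpha> borel fst"

definition marg2 :: "(real \<times> real) measure \<Rightarrow> real measure" where
  "marg2 \<alpha> = distr \<alpha> borel snd"

definition disintegration :: "(real \<times> real) measure \<Rightarrow> (real \<Rightarrow> real measure) \<Rightarrow> bool" where
  "disintegration \<alpha> K \<longleftrightarrow>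
     (\<forall>x. prob_space (K x) \<and> sets (K x) = sets (borel :: real measure)) \<and>
     (\<forall>B \<in> sets (borel :: real measure). (\<lambda>x. emeasure (K x) B) \<in> borel_measurable borel) \<and>
     (\<forall>A \<in> sets (borel :: real measure). \<forall>B \<in> sets (borel :: real measure).
        emeasure \<alpha> (A \<times> B) = (\<integral>\<^sup>+ x. emeasure (K x) B * indicator A x \<partial>(marg1 \<alpha>)))"

definition competitors :: "(real \<times> real) measure \<Rightarrow> (real \<times> real) measure \<Rightarrow> bool" where
  "competitors \<alpha> \<beta> \<longleftrightarrow>
     fin_borel_meas2 \<alpha> \<and> fin_borel_meas2 \<beta> \<and>
     marg1 \<alpha> = marg1 \<beta> \<and> marg2 \<alpha> = marg2 \<beta> \<and>
     (\<exists>K L. disintegration \<alpha> K \<and> disintegration \<beta> L \<and>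
        (AE x in marg1 \<alpha>. (\<integral> y. y \<partial>(K x)) = (\<integral> y. y \<partial>(L x))))"

definition concentrated_on :: "(real \<times> real) measure \<Rightarrow> (real \<times> real) set \<Rightarrow> bool" where
  "concentrated_on \<alpha> S \<longleftrightarrow> (AE p in \<alpha>. p \<in> S)"

definition competitorblind :: "(real \<times> real \<Rightarrow> real) \<Rightarrow> real set \<Rightarrow> real set \<Rightarrow> bool" where
  "competitorblind f A B \<longleftrightarrow>
     set_borel_measurable borel (A \<times> B) f \<and>
     (\<forall>\<alpha> \<beta>. competitors \<alpha> \<beta> \<and> concentrated_on \<alpha> (A \<times> B) \<and> concentrated_on \<beta> (A \<times> B)
        \<and> set_integrable \<alpha> (A \<times> B) f \<and> set_integrable \<beta> (A \<times> B) f
        \<longrightarrow> set_lebesgue_integral \<alpha> (A \<times> B) f = set_lebesgue_integral \<beta> (A \<times> B) f)"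

end

theory Submission
  imports Defs
begin

definition Dm :: "'a::topological_space pmf \<Rightarrow> 'a measure" where
  "Dm p = distr (measure_pmf p) borel id"

lemma sets_Dm[simp, measurable_cong]: "sets (Dm p) = sets borel"
  by (simp add: Dm_def)

lemma space_Dm[simp]: "space (Dm p) = UNIV"
  by (simp add: Dm_def)

lemma prob_space_Dm: "prob_space (Dm p)"
  unfolding Dm_def by (rule prob_space.prob_space_distr) (auto simp: prob_space_measure_pmf)

lemma emeasure_Dm: "A \<in> sets borel \<Longrightarrow> emeasure (Dm p) A = emeasure (measure_pmf p) A"
  unfolding Dm_def by (subst emeasure_distr) auto

lemma nn_integral_Dm: "f \<in> borel_measurable borel \<Longrightarrow> (\<integral>\<^sup>+x. f x \<partial>Dm p) = (\<integral>\<^sup>+x. f x \<partial>measure_pmf p)"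
  unfolding Dm_def by (subst nn_integral_distr) auto

lemma integral_Dm: fixes f :: "_ \<Rightarrow> real" shows "f \<in> borel_measurable borel \<Longrightarrow> (\<integral>x. f x \<partial>Dm p) = (\<integral>x. f x \<partial>measure_pmf p)"
  unfolding Dm_def by (subst integral_distr) auto

lemma integrable_Dm: fixes f :: "_ \<Rightarrow> real" shows "f \<in> borel_measurable borel \<Longrightarrow> integrable (Dm p) f = integrable (measure_pmf p) f"
  unfolding Dm_def by (subst integrable_distr_eq) auto

lemma fst_borel[measurable]: "fst \<in> borel_measurable (borel :: (real \<times> real) measure)"
  by (rule borel_measurable_continuous_onI) (intro continuous_on_fst continuous_on_id)

lemma snd_borel[measurable]: "snd \<in> borel_measurable (borel :: (real \<times> real) measure)"
  by (rule borel_measurable_continuous_onI) (intro continuous_on_snd continuous_on_id)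

lemma marg1_Dm: "marg1 (Dm (P :: (real \<times> real) pmf)) = Dm (map_pmf fst P)"
  unfolding marg1_def Dm_def map_pmf_rep_eq
  apply (subst distr_distr) apply (rule fst_borel) apply simp
  apply (subst distr_distr) apply simp apply simp
  by (simp add: comp_def)

lemma marg2_Dm: "marg2 (Dm (P :: (real \<times> real) pmf)) = Dm (map_pmf snd P)"
  unfolding marg2_def Dm_def map_pmf_rep_eq
  apply (subst distr_distr) apply (rule snd_borel) apply simp
  apply (subst distr_distr) apply simp apply simp
  by (simp add: comp_def)

lemma fin_Dm: "fin_borel_meas2 (Dm P)"
  unfolding fin_borel_meas2_def using prob_space_Dm[of P]
  by (simp add: prob_space_def)

lemma AE_Dm: fixes P :: "'a::t1_space pmf" assumes "finite (set_pmf P)" "set_pmf P \<subseteq> S"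
  shows "AE x in Dm P. x \<in> S"
proof (rule AE_I[where N="- set_pmf P"])
  show "{x \<in> space (Dm P). x \<notin> S} \<subseteq> - set_pmf P" using assms by auto
  have "closed (set_pmf P)" using assms(1) by (rule finite_imp_closed)
  then show "- set_pmf P \<in> sets (Dm P)" by auto
  then have "emeasure (Dm P) (- set_pmf P) = emeasure (measure_pmf P) (- set_pmf P)"
    by (simp add: emeasure_Dm)
  also have "\<dots> = 0"
    by (simp add: measure_pmf.emeasure_eq_measure measure_pmf_zero_iff)
  finally show "emeasure (Dm P) (- set_pmf P) = 0" .
qed

lemma disint:
  fixes X :: "real pmf" and K :: "real \<Rightarrow> real pmf"
  assumes meas: "\<And>B. B \<in> sets borel \<Longrightarrow> (\<lambda>x. emeasure (Dm (K x)) B) \<in> borel_measurable borel"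
  shows "disintegration (Dm (bind_pmf X (\<lambda>x. map_pmf (Pair x) (K x)))) (\<lambda>x. Dm (K x))"
  unfolding disintegration_def
proof (intro conjI ballI allI)
  fix x show "prob_space (Dm (K x))" by (rule prob_space_Dm)
  show "sets (Dm (K x)) = sets borel" by simp
next
  fix B :: "real set" assume "B \<in> sets borel" then show "(\<lambda>x. emeasure (Dm (K x)) B) \<in> borel_measurable borel"
    by (rule meas)
next
  fix A B :: "real set" assume A: "A \<in> sets borel" and B: "B \<in> sets borel"
  let ?P = "bind_pmf X (\<lambda>x. map_pmf (Pair x) (K x))"
  have AB: "A \<times> B \<in> sets (borel :: (real \<times> real) measure)"
    using A B by (simp add: borel_prod[symmetric])
  have eK: "emeasure (Dm (K x)) B = emeasure (measure_pmf (K x)) B" for x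
    using B by (rule emeasure_Dm)
  have "emeasure (Dm ?P) (A \<times> B) = emeasure (measure_pmf ?P) (A \<times> B)"
    using AB by (rule emeasure_Dm)
  also have "\<dots> = (\<integral>\<^sup>+q. indicator (A \<times> B) q \<partial>measure_pmf ?P)"
    by (rule nn_integral_indicator[symmetric]) simp
  also have "\<dots> = (\<integral>\<^sup>+x. \<integral>\<^sup>+y. indicator A x * indicator B y \<partial>K x \<partial>X)"
    unfolding nn_integral_bind_pmf nn_integral_map_pmf
    by (intro nn_integral_cong) (auto split: split_indicator)
  also have "\<dots> = (\<integral>\<^sup>+x. indicator A x * emeasure (measure_pmf (K x)) B \<partial>X)"
    by (subst nn_integral_cmult) auto
  also have "\<dots> = (\<integral>\<^sup>+x. emeasure (Dm (K x)) B * indicator A x \<partial>X)"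
    by (simp add: eK mult.commute)
  also have "\<dots> = (\<integral>\<^sup>+q. emeasure (Dm (K (fst q))) B * indicator A (fst q) \<partial>measure_pmf ?P)"
    by (simp add: measure_pmf.emeasure_space_1)
  also have "\<dots> = (\<integral>\<^sup>+x. emeasure (Dm (K x)) B * indicator A x \<partial>marg1 (Dm ?P))"
    unfolding marg1_Dm using meas[OF B] A
    by (subst nn_integral_Dm) auto
  finally show "emeasure (Dm ?P) (A \<times> B) = (\<integral>\<^sup>+x. emeasure (Dm (K x)) B * indicator A x \<partial>marg1 (Dm ?P))" .
qed

lemma meas_if: "(\<lambda>x::real. if x = a then (c::ennreal) else d) \<in> borel_measurable borel"
  by (rule measurable_If) auto

theorem lemma4p7:
  fixes I J Jt :: "real set" and t h :: "real \<times> real \<Rightarrow> real"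
  assumes "nondeg_interval I" and "nondeg_interval J"
    and "t ` (I \<times> J) \<subseteq> Jt"
    and "\<forall>p \<in> I \<times> J. h p > 0"
    and "\<forall>g :: real \<Rightarrow> real. continuous_on UNIV g \<and> bounded (range g)
           \<longrightarrow> competitorblind (\<lambda>p. g (t p) * h p) I J"
  shows "\<not> inj_on t (I \<times> J)"
proof
  assume inj: "inj_on t (I \<times> J)"
  obtain x1 x2 where x: "x1 \<in> I" "x2 \<in> I" "x1 \<noteq> x2" using assms(1) unfolding nondeg_interval_def by blast
  obtain y1 y2 where y: "y1 \<in> J" "y2 \<in> J" "y1 \<noteq> y2" using assms(2) unfolding nondeg_interval_def by blast
  define m where "m = (y1 + y2) / 2"
  have m: "m \<in> J"
  proof (rule mem_is_interval_1_I[of J "min y1 y2" "max y1 y2"])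
    show "is_interval J" using assms(2) unfolding nondeg_interval_def by blast
  qed (use y in \<open>auto simp: m_def min_def max_def\<close>)
  have my: "m \<noteq> y1" "m \<noteq> y2" using y(3) by (auto simp: m_def)
  define X where "X = pmf_of_set {x1, x2}"
  define K where "K = (\<lambda>x. if x = x1 then pmf_of_set {y1, y2} else return_pmf m)"
  define sw where "sw = (\<lambda>x. if x = x1 then x2 else x1)"
  define L where "L = (\<lambda>x. K (sw x))"
  define Pa where "Pa = bind_pmf X (\<lambda>x. map_pmf (Pair x) (K x))"
  define Pb where "Pb = bind_pmf X (\<lambda>x. map_pmf (Pair x) (L x))"
  have setPa: "set_pmf Pa = {(x1,y1),(x1,y2),(x2,m)}"
    using x(3) by (auto simp: Pa_def X_def K_def)
  have setPb: "set_pmf Pb = {(x1,m),(x2,y1),(x2,y2)}"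
    using x(3) by (auto simp: Pb_def X_def L_def K_def sw_def)
  have finPa: "finite (set_pmf Pa)" and finPb: "finite (set_pmf Pb)" using setPa setPb by auto
  let ?p = "(x1, y1)"
  define b1 where "b1 = t (x1, y2)"
  define b2 where "b2 = t (x2, m)"
  define b3 where "b3 = t (x1, m)"
  define b4 where "b4 = t (x2, y1)"
  define b5 where "b5 = t (x2, y2)"
  define g where "g = (\<lambda>s::real. min 1 (\<bar>s - b1\<bar> * \<bar>s - b2\<bar> * \<bar>s - b3\<bar> * \<bar>s - b4\<bar> * \<bar>s - b5\<bar>))"
  have tneq: "t ?p \<noteq> t q" if "q \<in> I \<times> J" "q \<noteq> ?p" for q
    using inj_onD[OF inj, of ?p q] that x y by auto
  have "t ?p \<noteq> b1" "t ?p \<noteq> b2" "t ?p \<noteq> b3" "t ?p \<noteq> b4" "t ?p \<noteq> b5"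
    unfolding b1_def b2_def b3_def b4_def b5_def
    by (rule tneq; use x y m my in auto)+
  then have gpos: "g (t ?p) > 0" unfolding g_def by auto
  have gz: "g b1 = 0" "g b2 = 0" "g b3 = 0" "g b4 = 0" "g b5 = 0" unfolding g_def by auto
  have gcont: "continuous_on UNIV g" unfolding g_def by (intro continuous_intros)
  have gbd: "bounded (range g)" unfolding bounded_iff
    by (rule exI[of _ 1]) (auto simp: g_def)
  define f where "f = (\<lambda>p. g (t p) * h p)"
  have cb: "competitorblind f I J" using assms(5) gcont gbd unfolding f_def by blast
  then have fmeas: "(\<lambda>p. indicator (I \<times> J) p *\<^sub>R f p) \<in> borel_measurable borel"
    unfolding competitorblind_def set_borel_measurable_def by blast
  define \<alpha> where "\<alpha> = Dm Pa"
  define \<beta> where "\<beta> = Dm Pb"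
  have mf1: "map_pmf fst Pa = X" "map_pmf fst Pb = X"
    by (simp_all add: Pa_def Pb_def map_bind_pmf map_pmf_comp bind_return_pmf')
  have swX: "map_pmf sw X = X"
    unfolding X_def using x(3) by (subst map_pmf_of_set_inj) (auto simp: sw_def inj_on_def insert_commute)
  have mf2: "map_pmf snd Pb = map_pmf snd Pa"
  proof -
    have "map_pmf snd Pb = bind_pmf X (\<lambda>x. K (sw x))"
      by (simp add: Pb_def L_def map_bind_pmf map_pmf_comp)
    also have "\<dots> = bind_pmf (map_pmf sw X) K" by (simp add: bind_map_pmf)
    also have "\<dots> = map_pmf snd Pa"
      by (simp add: swX Pa_def map_bind_pmf map_pmf_comp)
    finally show ?thesis .
  qed
  have I1: "(\<integral>y. y \<partial>Dm (pmf_of_set {y1, y2})) = m"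
    using y(3) by (subst integral_Dm) (auto simp: integral_pmf_of_set m_def)
  have I2: "(\<integral>y. y \<partial>Dm (return_pmf m)) = m"
    by (subst integral_Dm) auto
  have measK: "(\<lambda>x. emeasure (Dm (K x)) B) \<in> borel_measurable borel" for B
  proof -
    have "(\<lambda>x. emeasure (Dm (K x)) B) = (\<lambda>x. if x = x1 then emeasure (Dm (pmf_of_set {y1, y2})) B else emeasure (Dm (return_pmf m)) B)"
      by (auto simp: K_def)
    then show ?thesis using meas_if by simp
  qed
  have measL: "(\<lambda>x. emeasure (Dm (L x)) B) \<in> borel_measurable borel" for B
  proof -
    have "(\<lambda>x. emeasure (Dm (L x)) B) = (\<lambda>x. if x = x1 then emeasure (Dm (return_pmf m)) B else emeasure (Dm (pmf_of_set {y1, y2})) B)"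
      using x(3) by (auto simp: L_def K_def sw_def)
    then show ?thesis using meas_if by simp
  qed
  have comp: "competitors \<alpha> \<beta>"
    unfolding competitors_def
  proof (intro conjI exI)
    show "fin_borel_meas2 \<alpha>" "fin_borel_meas2 \<beta>" unfolding \<alpha>_def \<beta>_def by (rule fin_Dm)+
    show "marg1 \<alpha> = marg1 \<beta>" unfolding \<alpha>_def \<beta>_def marg1_Dm mf1 ..
    show "marg2 \<alpha> = marg2 \<beta>" unfolding \<alpha>_def \<beta>_def marg2_Dm mf2 ..
    show "disintegration \<alpha> (\<lambda>x. Dm (K x))" unfolding \<alpha>_def Pa_def by (rule disint) (rule measK)
    show "disintegration \<beta> (\<lambda>x. Dm (L x))" unfolding \<beta>_def Pb_def by (rule disint) (rule measL)
    show "AE x in marg1 \<alpha>. (\<integral>y. y \<partial>Dm (K x)) = (\<integral>y. y \<partial>Dm (L x))"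
      using x(3) by (intro AE_I2) (auto simp: K_def L_def sw_def I1 I2)
  qed
  have conc: "concentrated_on \<alpha> (I \<times> J)" "concentrated_on \<beta> (I \<times> J)"
    unfolding concentrated_on_def \<alpha>_def \<beta>_def
    by (rule AE_Dm; use finPa finPb setPa setPb x y m in auto)+
  have integ: "set_integrable \<alpha> (I \<times> J) f" "set_integrable \<beta> (I \<times> J) f"
    unfolding set_integrable_def \<alpha>_def \<beta>_def
    using fmeas finPa finPb by (simp_all add: integrable_Dm integrable_measure_pmf_finite)
  have "set_lebesgue_integral \<alpha> (I \<times> J) f = set_lebesgue_integral \<beta> (I \<times> J) f"
    using cb comp conc integ unfolding competitorblind_def by blast
  moreover have "set_lebesgue_integral \<alpha> (I \<times> J) f = pmf Pa ?p * (g (t ?p) * h ?p)"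
  proof -
    have "set_lebesgue_integral \<alpha> (I \<times> J) f = (\<integral>q. indicator (I \<times> J) q *\<^sub>R f q \<partial>measure_pmf Pa)"
      unfolding set_lebesgue_integral_def \<alpha>_def using fmeas by (rule integral_Dm)
    also have "\<dots> = (\<Sum>a\<in>{?p}. pmf Pa a *\<^sub>R (indicator (I \<times> J) a *\<^sub>R f a))"
      by (rule integral_measure_pmf) (use setPa gz in \<open>auto simp: f_def b1_def b2_def\<close>)
    also have "\<dots> = pmf Pa ?p * (g (t ?p) * h ?p)" using x y by (simp add: f_def)
    finally show ?thesis .
  qed
  moreover have "set_lebesgue_integral \<beta> (I \<times> J) f = 0"
  proof -
    have "set_lebesgue_integral \<beta> (I \<times> J) f = (\<integral>q. indicator (I \<times> J) q *\<^sub>R f q \<partial>measure_pmf Pb)"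
      unfolding set_lebesgue_integral_def \<beta>_def using fmeas by (rule integral_Dm)
    also have "\<dots> = (\<Sum>a\<in>{}. pmf Pb a *\<^sub>R (indicator (I \<times> J) a *\<^sub>R f a))"
      by (rule integral_measure_pmf) (use setPb gz in \<open>auto simp: f_def b3_def b4_def b5_def\<close>)
    finally show ?thesis by simp
  qed
  moreover have "pmf Pa ?p > 0" using setPa by (simp add: pmf_positive)
  moreover have "h ?p > 0" using assms(4) x y by auto
  ultimately show False using gpos by simp
qed

end
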